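(* Let $X$ be an extremally disconnected topological space satisfying $S_{fin}(s\mathcal{O},s\mathcal{O})$ (i.e. $X$ is semi-Menger). Then Alice (the first player) does not have a winning strategy in the game $G_{fin}(s\mathcal{O},s\mathcal{O})$ played on $X$.
   Context: A subset $A$ of a topological space $X$ is semi-open if $A\subseteq \mathrm{Cl}(\mathrm{Int}(A))$. A semi-open cover of $X$ is a cover of $X$ by semi-open sets; $s\mathcal{O}$ denotes the collection of all semi-open covers of $X$. A space is extremally disconnected if the closure of every open set is open. $X$ satisfies $S_{fin}(s\mathcal{O},s\mathcal{O})$ (is semi-Menger) if for each sequence $\langle\mathcal{U}_n:n\in\omega\rangle$ of semi-open covers of $X$ there is a sequence $\langle\mathcal{V}_n:n\in\omega\rangle$ such that each $\mathcal{V}_n$ is a finite subset of $\mathcal{U}_n$ and $\bigcup_{n}\mathcal{V}_n$ covers $X$. The game $G_{fin}(s\mathcal{O},s\mathcal{O})$ is played by Alice and Bob in innings $n\in\omega$: in inning $n$ Alice chooses a semi-open cover $\mathcal{U}_n$ of $X$ and Bob chooses a finite subset $\mathcal{V}_n\subseteq\mathcal{U}_n$. Bob wins the play if $\bigcup_n\bigcup\mathcal{V}_n=X$; otherwise Alice wins. A strategy for Alice is a rule assigning to each finite sequence of Bob's previous moves a semi-open cover of $X$; it is winning if Alice wins every play in which she follows it. *)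

theory Defs
  imports "HOL-Analysis.Analysis"
begin

definition semi_open :: "'a topology \<Rightarrow> 'a set \<Rightarrow> bool" where
  "semi_open X A \<longleftrightarrow> A \<subseteq> topspace X \<and> A \<subseteq> X closure_of (X interior_of A)"

definition semi_open_covers :: "'a topology \<Rightarrow> 'a set set set" where
  "semi_open_covers X = {\<U>. (\<forall>U\<in>\<U>. semi_open X U) \<and> \<Union>\<U> = topspace X}"

definition extremally_disconnected :: "'a topology \<Rightarrow> bool" where
  "extremally_disconnected X \<longleftrightarrow> (\<forall>U. openin X U \<longrightarrow> openin X (X closure_of U))"

definition semi_Menger :: "'a topology \<Rightarrow> bool" where
  "semi_Menger X \<longleftrightarrow>
     (\<forall>\<U> :: nat \<Rightarrow> 'a set set. (\<forall>n. \<U> n \<in> semi_open_covers X) \<longrightarrow>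
        (\<exists>\<V> :: nat \<Rightarrow> 'a set set. (\<forall>n. finite (\<V> n) \<and> \<V> n \<subseteq> \<U> n) \<and>
                  \<Union>(\<Union>n. \<V> n) = topspace X))"

text \<open>A strategy for Alice in G_fin(sO, sO): to each finite sequence of Bob's previous
  moves (listed in order) it assigns a semi-open cover of X.\<close>
definition alice_strategy :: "'a topology \<Rightarrow> ('a set set list \<Rightarrow> 'a set set) \<Rightarrow> bool" where
  "alice_strategy X \<sigma> \<longleftrightarrow> (\<forall>s. \<sigma> s \<in> semi_open_covers X)"

definition alice_winning_strategy :: "'a topology \<Rightarrow> ('a set set list \<Rightarrow> 'a set set) \<Rightarrow> bool" where
  "alice_winning_strategy X \<sigma> \<longleftrightarrow> alice_strategy X \<sigma> \<and>
     (\<forall>\<V> :: nat \<Rightarrow> 'a set set.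
        (\<forall>n. finite (\<V> n) \<and> \<V> n \<subseteq> \<sigma> (map \<V> [0..<n])) \<longrightarrow>
        \<Union>(\<Union>n. \<V> n) \<noteq> topspace X)"

end

theory Submission
  imports Defs
begin

lemma semi_open_Int:
  assumes ED: "extremally_disconnected X" and A: "semi_open X A" and B: "semi_open X B"
  shows "semi_open X (A \<inter> B)"
  unfolding semi_open_def
proof (intro conjI)
  show "A \<inter> B \<subseteq> topspace X" using A unfolding semi_open_def by blast
  show "A \<inter> B \<subseteq> X closure_of (X interior_of (A \<inter> B))"
  proof
  fix x assume x: "x \<in> A \<inter> B"
  have xA: "x \<in> X closure_of (X interior_of A)" using A x unfolding semi_open_def by blast
  have xB: "x \<in> X closure_of (X interior_of B)" using B x unfolding semi_open_def by blast
  have oC: "openin X (X closure_of (X interior_of A))"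
    using ED unfolding extremally_disconnected_def by simp
  show "x \<in> X closure_of (X interior_of (A \<inter> B))"
    unfolding in_closure_of interior_of_Int
  proof (intro conjI allI impI)
    show "x \<in> topspace X" using xA in_closure_of by metis
    fix T assume T: "x \<in> T \<and> openin X T"
    have o1: "openin X (T \<inter> X closure_of (X interior_of A))" using T oC by (simp add: openin_Int)
    have x1: "x \<in> T \<inter> X closure_of (X interior_of A)" using T xA by simp
    obtain y where y: "y \<in> X interior_of B" "y \<in> T \<inter> X closure_of (X interior_of A)"
      using xB o1 x1 unfolding in_closure_of by meson
    have o2: "openin X (T \<inter> X interior_of B)" using T by (simp add: openin_Int)
    have y2: "y \<in> T \<inter> X interior_of B" using y by simp
    have "y \<in> X closure_of (X interior_of A)" using y by simp
    then obtain z where "z \<in> X interior_of A" "z \<in> T \<inter> X interior_of B"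
      using o2 y2 unfolding in_closure_of by meson
    then show "\<exists>y. y \<in> X interior_of A \<inter> X interior_of B \<and> y \<in> T" by blast
  qed
  qed
qed

lemma semi_open_Union:
  assumes "\<And>A. A \<in> \<F> \<Longrightarrow> semi_open X A"
  shows "semi_open X (\<Union>\<F>)"
  unfolding semi_open_def
proof (intro conjI)
  show "\<Union>\<F> \<subseteq> topspace X" using assms unfolding semi_open_def by blast
  show "\<Union>\<F> \<subseteq> X closure_of (X interior_of (\<Union>\<F>))"
  proof
  fix x assume "x \<in> \<Union>\<F>"
  then obtain A where A: "A \<in> \<F>" "x \<in> A" by blast
  have "x \<in> X closure_of (X interior_of A)" using assms[OF A(1)] A(2) unfolding semi_open_def by blast
  moreover have "X closure_of (X interior_of A) \<subseteq> X closure_of (X interior_of (\<Union>\<F>))"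
    by (intro closure_of_mono interior_of_mono) (use A in blast)
  ultimately show "x \<in> X closure_of (X interior_of (\<Union>\<F>))" by blast
  qed
qed

lemma semi_open_topspace: "semi_open X (topspace X)"
  unfolding semi_open_def by (simp add: closure_of_topspace interior_of_topspace)

lemma semi_open_Inter_fin:
  assumes ED: "extremally_disconnected X" and fin: "finite I"
    and so: "\<And>i. i \<in> I \<Longrightarrow> semi_open X (A i)"
  shows "semi_open X (topspace X \<inter> \<Inter>(A ` I))"
  using fin so
proof (induction I rule: finite_induct)
  case empty
  then show ?case using semi_open_topspace by simp
next
  case (insert i I)
  have sub: "A i \<subseteq> topspace X" using insert.prems unfolding semi_open_def by blast
  have "topspace X \<inter> \<Inter>(A ` insert i I) = A i \<inter> (topspace X \<inter> \<Inter>(A ` I))"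
    using sub by blast
  then show ?case using semi_open_Int[OF ED] insert by simp
qed

definition sel :: "'a topology \<Rightarrow> 'a set set \<Rightarrow> nat \<Rightarrow> 'a set set" where
  "sel X U = (SOME V. (\<forall>n. finite (V n) \<and> V n \<subseteq> U) \<and> \<Union>(\<Union>n. V n) = topspace X)"

definition mv :: "'a topology \<Rightarrow> 'a set set \<Rightarrow> nat \<Rightarrow> 'a set set" where
  "mv X U j = (\<Union>n\<le>j. sel X U n)"

primrec hs :: "'a topology \<Rightarrow> ('a set set list \<Rightarrow> 'a set set) \<Rightarrow> (nat \<Rightarrow> nat) \<Rightarrow> nat \<Rightarrow> 'a set set list" where
  "hs X \<sigma> f 0 = []"
| "hs X \<sigma> f (Suc k) = hs X \<sigma> f k @ [mv X (\<sigma> (hs X \<sigma> f k)) (f k)]"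

definition Oset :: "'a topology \<Rightarrow> ('a set set list \<Rightarrow> 'a set set) \<Rightarrow> nat list \<Rightarrow> nat \<Rightarrow> 'a set" where
  "Oset X \<sigma> s j = \<Union>(mv X (\<sigma> (hs X \<sigma> (nth s) (length s))) j)"

definition Bset :: "'a topology \<Rightarrow> ('a set set list \<Rightarrow> 'a set set) \<Rightarrow> nat \<Rightarrow> (nat \<Rightarrow> nat) \<Rightarrow> 'a set" where
  "Bset X \<sigma> n b = {x \<in> topspace X. \<forall>s. length s \<le> n \<longrightarrow> (\<forall>i<length s. s!i < b i) \<longrightarrow>
      x \<in> Oset X \<sigma> s (b (length s))}"

lemma sel_prop:
  assumes SM: "semi_Menger X" and U: "U \<in> semi_open_covers X"
  shows "(\<forall>n. finite (sel X U n) \<and> sel X U n \<subseteq> U) \<and> \<Union>(\<Union>n. sel X U n) = topspace X"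
proof -
  have "\<exists>V::nat \<Rightarrow> 'a set set. (\<forall>n. finite (V n) \<and> V n \<subseteq> U) \<and> \<Union>(\<Union>n. V n) = topspace X"
  proof -
    have "\<forall>n. (\<lambda>_::nat. U) n \<in> semi_open_covers X" using U by simp
    then have "\<exists>V::nat \<Rightarrow> 'a set set. (\<forall>n. finite (V n) \<and> V n \<subseteq> (\<lambda>_::nat. U) n) \<and> \<Union>(\<Union>n. V n) = topspace X"
      using SM[unfolded semi_Menger_def, rule_format, of "\<lambda>_. U"] by simp
    then show ?thesis by simp
  qed
  then show ?thesis unfolding sel_def by (rule someI_ex)
qed

lemma mv_finite: "semi_Menger X \<Longrightarrow> U \<in> semi_open_covers X \<Longrightarrow> finite (mv X U j)"
  unfolding mv_def using sel_prop by blast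

lemma mv_sub: "semi_Menger X \<Longrightarrow> U \<in> semi_open_covers X \<Longrightarrow> mv X U j \<subseteq> U"
  unfolding mv_def using sel_prop by blast

lemma mv_mono: "j \<le> j' \<Longrightarrow> mv X U j \<subseteq> mv X U j'"
  unfolding mv_def by (auto intro: order_trans)

lemma mv_cover:
  assumes "semi_Menger X" "U \<in> semi_open_covers X" "x \<in> topspace X"
  shows "\<exists>j. x \<in> \<Union>(mv X U j)"
proof -
  from sel_prop[OF assms(1,2)] assms(3) obtain n where "x \<in> \<Union>(sel X U n)" by blast
  then show ?thesis unfolding mv_def by blast
qed

lemma hs_cong: "(\<And>i. i < k \<Longrightarrow> f i = g i) \<Longrightarrow> hs X \<sigma> f k = hs X \<sigma> g k"
  by (induction k) auto

lemma hs_map: "hs X \<sigma> f k = map (\<lambda>i. mv X (\<sigma> (hs X \<sigma> f i)) (f i)) [0..<k]"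
  by (induction k) auto

lemma Oset_semi_open:
  assumes "semi_Menger X" "alice_strategy X \<sigma>"
  shows "semi_open X (Oset X \<sigma> s j)"
proof -
  have C: "\<sigma> (hs X \<sigma> (nth s) (length s)) \<in> semi_open_covers X"
    using assms(2) unfolding alice_strategy_def by blast
  show ?thesis unfolding Oset_def
    by (rule semi_open_Union) (use mv_sub[OF assms(1) C] C in \<open>auto simp: semi_open_covers_def\<close>)
qed

lemma Oset_mono: "j \<le> j' \<Longrightarrow> Oset X \<sigma> s j \<subseteq> Oset X \<sigma> s j'"
  unfolding Oset_def using mv_mono by blast

lemma Bset_semi_open:
  assumes ED: "extremally_disconnected X" and SM: "semi_Menger X" and AS: "alice_strategy X \<sigma>"
  shows "semi_open X (Bset X \<sigma> n b)"
proof -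
  define S where "S = {s::nat list. length s \<le> n \<and> (\<forall>i<length s. s!i < b i)}"
  have "S \<subseteq> {s. set s \<subseteq> {..<Max (b ` {..n})} \<and> length s \<le> n}"
  proof
    fix s assume s: "s \<in> S"
    have "set s \<subseteq> {..<Max (b ` {..n})}"
    proof
      fix y assume "y \<in> set s"
      then obtain i where i: "i < length s" "s!i = y" by (metis in_set_conv_nth)
      have "i \<le> n" using i s unfolding S_def by simp
      then have "b i \<le> Max (b ` {..n})" by (intro Max_ge) auto
      moreover have "s!i < b i" using i(1) s unfolding S_def by blast
      ultimately show "y \<in> {..<Max (b ` {..n})}" using i by simp
    qed
    then show "s \<in> {s. set s \<subseteq> {..<Max (b ` {..n})} \<and> length s \<le> n}" using s unfolding S_def by simp
  qed
  then have fin: "finite S" by (rule finite_subset) (rule finite_lists_length_le, simp)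
  have eq: "Bset X \<sigma> n b = topspace X \<inter> \<Inter>((\<lambda>s. Oset X \<sigma> s (b (length s))) ` S)"
    unfolding Bset_def S_def by auto
  show ?thesis unfolding eq
    by (rule semi_open_Inter_fin[OF ED fin]) (rule Oset_semi_open[OF SM AS])
qed

primrec bnd :: "(nat list \<Rightarrow> nat) \<Rightarrow> nat \<Rightarrow> nat" where
  "bnd g 0 = g []"
| "bnd g (Suc k) = max (bnd g k) (Max (insert 0 (g ` {s. set s \<subseteq> {..<bnd g k} \<and> length s = Suc k})))"

lemma bnd_mono: "i \<le> k \<Longrightarrow> bnd g i \<le> bnd g k"
  by (rule lift_Suc_mono_le[of "bnd g"]) auto

lemma bnd_ge:
  assumes "\<forall>i<length s. s!i < bnd g i"
  shows "g s \<le> bnd g (length s)"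
proof (cases s rule: rev_cases)
  case Nil
  then show ?thesis by simp
next
  case (snoc ys y)
  define k where "k = length ys"
  have len: "length s = Suc k" using snoc k_def by simp
  have "set s \<subseteq> {..<bnd g k}"
  proof
    fix z assume "z \<in> set s"
    then obtain i where i: "i < length s" "s!i = z" by (metis in_set_conv_nth)
    have "bnd g i \<le> bnd g k" using i len by (intro bnd_mono) simp
    then show "z \<in> {..<bnd g k}" using i assms by fastforce
  qed
  then have mem: "s \<in> {s. set s \<subseteq> {..<bnd g k} \<and> length s = Suc k}" using len by simp
  have fin: "finite {s. set s \<subseteq> {..<bnd g k} \<and> length s = Suc k}"
    by (rule finite_lists_length_eq) simp
  have "g s \<le> Max (insert 0 (g ` {s. set s \<subseteq> {..<bnd g k} \<and> length s = Suc k}))"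
    by (rule Max_ge) (use fin mem in auto)
  then show ?thesis unfolding len by simp
qed

lemma Bset_cover:
  assumes SM: "semi_Menger X" and AS: "alice_strategy X \<sigma>" and x: "x \<in> topspace X"
  shows "\<exists>b. x \<in> Bset X \<sigma> n b"
proof -
  define g where "g s = (LEAST j. x \<in> Oset X \<sigma> s j)" for s
  have gI: "x \<in> Oset X \<sigma> s (g s)" for s
  proof -
    have C: "\<sigma> (hs X \<sigma> (nth s) (length s)) \<in> semi_open_covers X"
      using AS unfolding alice_strategy_def by blast
    have "\<exists>j. x \<in> Oset X \<sigma> s j" unfolding Oset_def by (rule mv_cover[OF SM C x])
    then show ?thesis unfolding g_def by (rule LeastI_ex)
  qed
  have "\<forall>s. length s \<le> n \<longrightarrow> (\<forall>i<length s. s!i < bnd g i) \<longrightarrow> x \<in> Oset X \<sigma> s (bnd g (length s))"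
  proof (intro allI impI)
    fix s :: "nat list" assume h: "\<forall>i<length s. s!i < bnd g i"
    show "x \<in> Oset X \<sigma> s (bnd g (length s))"
      using gI[of s] Oset_mono[OF bnd_ge[OF h]] by (rule subsetD[rotated])
  qed
  then have "x \<in> Bset X \<sigma> n (bnd g)"
    using x unfolding Bset_def by simp
  then show ?thesis by blast
qed

theorem mainTheorem1:
  fixes X :: "'a topology"
  assumes "extremally_disconnected X"
    and "semi_Menger X"
  shows "\<not> (\<exists>\<sigma>. alice_winning_strategy X \<sigma>)"
proof
  note ED = assms(1) and SM = assms(2)
  assume "\<exists>\<sigma>. alice_winning_strategy X \<sigma>"
  then obtain \<sigma> where ws: "alice_winning_strategy X \<sigma>" by blast
  have AS: "alice_strategy X \<sigma>" using ws unfolding alice_winning_strategy_def by blast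
  have Win: "\<And>V. (\<forall>n. finite (V n) \<and> V n \<subseteq> \<sigma> (map V [0..<n])) \<Longrightarrow> \<Union>(\<Union>n. V n) \<noteq> topspace X"
    using ws unfolding alice_winning_strategy_def by blast
  define C where "C n = range (Bset X \<sigma> n)" for n
  have Ccov: "\<forall>n. C n \<in> semi_open_covers X"
  proof
    fix n
    have "\<Union>(C n) \<subseteq> topspace X" unfolding C_def Bset_def by auto
    moreover have "topspace X \<subseteq> \<Union>(C n)"
    proof
      fix y assume "y \<in> topspace X"
      then obtain b where "y \<in> Bset X \<sigma> n b" using Bset_cover[OF SM AS] by blast
      then show "y \<in> \<Union>(C n)" unfolding C_def by blast
    qed
    ultimately show "C n \<in> semi_open_covers X"
      unfolding semi_open_covers_def C_def using Bset_semi_open[OF ED SM AS] by auto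
  qed
  have exF: "\<exists>F::nat \<Rightarrow> 'a set set. (\<forall>n. finite (F n) \<and> F n \<subseteq> C n) \<and> \<Union>(\<Union>n. F n) = topspace X"
    using SM[unfolded semi_Menger_def, rule_format, OF Ccov[rule_format]] .
  then obtain F :: "nat \<Rightarrow> 'a set set" where F: "\<forall>n. finite (F n) \<and> F n \<subseteq> C n"
    and cov: "\<Union>(\<Union>n. F n) = topspace X"
    by (elim exE conjE)
  define bW where "bW n W = (SOME b. W = Bset X \<sigma> n b)" for n W
  have bW: "W = Bset X \<sigma> n (bW n W)" if "W \<in> F n" for n W
  proof -
    have "\<exists>b. W = Bset X \<sigma> n b" using that F unfolding C_def by blast
    then show ?thesis unfolding bW_def by (rule someI_ex)
  qed
  define f where "f n = Max (insert 0 ((\<lambda>W. bW n W n) ` F n))" for n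
  have fge: "bW n W n \<le> f n" if "W \<in> F n" for n W
    unfolding f_def by (rule Max_ge) (use F that in auto)
  define V where "V k = mv X (\<sigma> (hs X \<sigma> f k)) (f k)" for k
  have hsV: "map V [0..<k] = hs X \<sigma> f k" for k
    unfolding V_def by (rule hs_map[symmetric])
  have Ck: "\<sigma> (hs X \<sigma> f k) \<in> semi_open_covers X" for k
    using AS unfolding alice_strategy_def by blast
  have "\<forall>n. finite (V n) \<and> V n \<subseteq> \<sigma> (map V [0..<n])"
  proof
    fix k show "finite (V k) \<and> V k \<subseteq> \<sigma> (map V [0..<k])"
      unfolding hsV unfolding V_def using mv_finite[OF SM Ck[of k]] mv_sub[OF SM Ck[of k]] by simp
  qed
  then have ne: "\<Union>(\<Union>n. V n) \<noteq> topspace X" by (rule Win)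
  have "\<Union>(\<Union>n. V n) \<subseteq> topspace X"
  proof
    fix y assume "y \<in> \<Union>(\<Union>n. V n)"
    then obtain k A where A: "A \<in> V k" "y \<in> A" by blast
    then have "A \<in> \<sigma> (hs X \<sigma> f k)" unfolding V_def using mv_sub[OF SM Ck] by blast
    then have "semi_open X A" using Ck unfolding semi_open_covers_def by blast
    then show "y \<in> topspace X" using A unfolding semi_open_def by blast
  qed
  with ne obtain x where x: "x \<in> topspace X" "x \<notin> \<Union>(\<Union>n. V n)" by blast
  obtain n W where W: "W \<in> F n" "x \<in> W" using cov x by blast
  define b where "b = bW n W"
  have xB: "x \<in> Bset X \<sigma> n b" using W(2) bW[OF W(1)] unfolding b_def by simp
  have Oeq: "Oset X \<sigma> (map f [0..<i]) j = \<Union>(mv X (\<sigma> (hs X \<sigma> f i)) j)" for i j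
  proof -
    have "hs X \<sigma> (nth (map f [0..<i])) (length (map f [0..<i])) = hs X \<sigma> f i"
      by simp (rule hs_cong, simp)
    then show ?thesis unfolding Oset_def by simp
  qed
  have xnot: "x \<notin> Oset X \<sigma> (map f [0..<i]) (f i)" for i
    using x(2) unfolding Oeq V_def by blast
  have xin: "x \<in> Oset X \<sigma> (map f [0..<i]) (b i)" if "i \<le> n" "\<forall>j<i. f j < b j" for i
  proof -
    have H: "\<forall>s. length s \<le> n \<longrightarrow> (\<forall>i<length s. s!i < b i) \<longrightarrow> x \<in> Oset X \<sigma> s (b (length s))"
      using xB unfolding Bset_def by simp
    show ?thesis using H[rule_format, of "map f [0..<i]"] that by simp
  qed
  have claim: "i \<le> n \<Longrightarrow> \<forall>j<i. f j < b j" for i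
  proof (induction i)
    case 0
    then show ?case by simp
  next
    case (Suc i)
    then have IH: "\<forall>j<i. f j < b j" by simp
    have "x \<in> Oset X \<sigma> (map f [0..<i]) (b i)" using xin[of i] IH Suc.prems by simp
    then have "f i < b i"
    proof (rule contrapos_pp)
      assume "\<not> f i < b i"
      then have "b i \<le> f i" by simp
      then show "x \<notin> Oset X \<sigma> (map f [0..<i]) (b i)"
        using xnot[of i] Oset_mono[of "b i" "f i" X \<sigma> "map f [0..<i]"] by blast
    qed
    then show ?case using IH less_Suc_eq by auto
  qed
  have "x \<in> Oset X \<sigma> (map f [0..<n]) (b n)" using xin claim by simp
  moreover have "b n \<le> f n" using fge W unfolding b_def by simp
  ultimately show False using xnot[of n] Oset_mono[of "b n" "f n" X \<sigma> "map f [0..<n]"] by blast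
qed

end
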